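(* Let $n\geq2$, $R_m,k>0$, $0\leq\alpha\leq1$. Let $\Omega\subset\mathbb{R}^n$ be a bounded Lipschitz domain of diameter at most $R_m$ whose complement is connected. Consider a source $\chi_\Omega\varphi$ with $\varphi\in C^\alpha(\overline\Omega)$. If the source is radiationless at wavenumber $k$, then there exists a positive constant $C$, depending only on $k,R_m,n$, such that \[ \big(\operatorname{diam}(\Omega)\big)^\alpha\geq C\,\frac{\sup_{\partial\Omega}|\varphi|}{\|\varphi\|_{C^\alpha(\overline\Omega)}}. \]
   Context: Source scattering: for $f=\chi_\Omega\varphi$ and $k>0$, let $u\in H^2_{loc}(\mathbb{R}^n)$ be the unique solution of $(\Delta+k^2)u=f$ satisfying the Sommerfeld radiation condition $\lim_{r\to\infty}r^{(n-1)/2}(\partial_r-ik)u=0$. Its far-field pattern is $u_\infty(\hat x)=C_{n,k}\int e^{-ik\hat x\cdot y}f(y)\,dy$, $\hat x\in\mathbb{S}^{n-1}$, with $C_{n,k}\neq0$ explicit (the leading coefficient in $u(x)\sim\frac{e^{ik|x|}}{|x|^{(n-1)/2}}u_\infty(x/|x|)$). The source is radiationless if $u_\infty\equiv0$. Standing assumption: bounded domains satisfy $H^2_0(\Omega)=\{u|_\Omega: u\in H^2(\mathbb{R}^n),\ u=0 \text{ in } \mathbb{R}^n\setminus\overline\Omega\}$. *)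

theory Defs
  imports "HOL-Analysis.Analysis"
begin

definition hproj :: "'a::euclidean_space \<Rightarrow> 'a \<Rightarrow> 'a" where
  "hproj nu v = v - (v \<bullet> nu) *\<^sub>R nu"

definition lipschitz_domain :: "'a::euclidean_space set \<Rightarrow> bool" where
  "lipschitz_domain \<Omega> \<longleftrightarrow> open \<Omega> \<and> connected \<Omega> \<and> \<Omega> \<noteq> {} \<and> bounded \<Omega> \<and>
    (\<forall>p\<in>frontier \<Omega>. \<exists>nu r h L g.
        norm nu = 1 \<and> r > 0 \<and> h > 0 \<and>
        L-lipschitz_on {y. y \<bullet> nu = 0} (g :: 'a \<Rightarrow> real) \<and> g 0 = 0 \<and>
        (let Cyl = {x. norm (hproj nu (x - p)) < r \<and> \<bar>(x - p) \<bullet> nu\<bar> < h}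
         in \<Omega> \<inter> Cyl = {x \<in> Cyl. (x - p) \<bullet> nu > g (hproj nu (x - p))}))"

definition holder_space :: "real \<Rightarrow> 'a::euclidean_space set \<Rightarrow> ('a \<Rightarrow> complex) set" where
  "holder_space \<alpha> S = {\<phi>. continuous_on S \<phi> \<and> bounded (\<phi> ` S) \<and>
      (\<exists>M. \<forall>x\<in>S. \<forall>y\<in>S. x \<noteq> y \<longrightarrow> cmod (\<phi> x - \<phi> y) \<le> M * dist x y powr \<alpha>)}"

definition holder_norm :: "real \<Rightarrow> 'a::euclidean_space set \<Rightarrow> ('a \<Rightarrow> complex) \<Rightarrow> real" where
  "holder_norm \<alpha> S \<phi> = (SUP x\<in>S. cmod (\<phi> x)) +
      (SUP xy\<in>{(x, y). x \<in> S \<and> y \<in> S \<and> x \<noteq> y}.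
         cmod (\<phi> (fst xy) - \<phi> (snd xy)) / dist (fst xy) (snd xy) powr \<alpha>)"

text \<open>Radiationless source chi_Omega phi at wavenumber k: the far-field pattern
  u_inf(xhat) = C_{n,k} * integral e^{-i k xhat.y} f(y) dy vanishes on the unit sphere.
  Since C_{n,k} <> 0 this is the vanishing of the integral.\<close>
definition radiationless :: "real \<Rightarrow> 'a::euclidean_space set \<Rightarrow> ('a \<Rightarrow> complex) \<Rightarrow> bool" where
  "radiationless k \<Omega> \<phi> \<longleftrightarrow>
     (\<forall>xh. norm xh = 1 \<longrightarrow>
        integral \<Omega> (\<lambda>y. exp (- \<i> * complex_of_real (k * (xh \<bullet> y))) * \<phi> y) = 0)"

end

theory Submission
  imports Defs
begin
lemma exp_i_bound: "cmod (exp (\<i> * complex_of_real t) - 1) \<le> \<bar>t\<bar>"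
proof -
  have "(cmod (exp (\<i> * complex_of_real t) - 1))\<^sup>2 = (cos t - 1)\<^sup>2 + (sin t)\<^sup>2"
    by (simp add: exp_Euler cmod_power2 cos_of_real sin_of_real)
  also have "\<dots> = 2 - 2 * cos t" by (simp add: power2_eq_square algebra_simps)
  also have "\<dots> = 4 * (sin (t/2))\<^sup>2" using cos_double_sin[of "t/2"] by simp
  also have "\<dots> \<le> 4 * (t/2)\<^sup>2"
    using abs_sin_x_le_abs_x[of "t/2"] abs_le_square_iff by (metis mult_left_mono zero_le_numeral)
  also have "\<dots> = \<bar>t\<bar>\<^sup>2" by (simp add: power2_eq_square)
  finally show ?thesis by (rule power2_le_imp_le) simp
qed

lemma key:
  fixes \<Omega> :: "'a::euclidean_space set" and \<phi> :: "'a \<Rightarrow> complex"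
  assumes "open \<Omega>" "bounded \<Omega>" "\<Omega> \<noteq> {}" "continuous_on \<Omega> \<phi>" "k \<ge> 0" "norm xh = 1"
    and A: "\<And>y. y \<in> \<Omega> \<Longrightarrow> cmod (\<phi> y - \<phi> p) \<le> A"
    and S: "\<And>y. y \<in> \<Omega> \<Longrightarrow> cmod (\<phi> y) \<le> S"
    and d: "\<And>y. y \<in> \<Omega> \<Longrightarrow> norm (y - p) \<le> d"
    and I: "integral \<Omega> (\<lambda>y. exp (- \<i> * complex_of_real (k * (xh \<bullet> y))) * \<phi> y) = 0"
  shows "cmod (\<phi> p) \<le> A + k * d * S"
proof -
  define g where "g y = exp (- \<i> * complex_of_real (k * (xh \<bullet> y))) * \<phi> y" for y
  define e where "e = exp (\<i> * complex_of_real (k * (xh \<bullet> p)))"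
  have meas: "\<Omega> \<in> lmeasurable" using assms lmeasurable_open by blast
  have S0: "S \<ge> 0" using S assms(3) by (meson all_not_in_conv norm_ge_zero order_trans)
  have cg: "continuous_on \<Omega> g" unfolding g_def
    by (intro continuous_intros assms)
  have gint: "g integrable_on \<Omega>"
  proof (rule measurable_bounded_by_integrable_imp_integrable)
    show "g \<in> borel_measurable (lebesgue_on \<Omega>)"
      using cg meas continuous_imp_measurable_on_sets_lebesgue fmeasurableD by blast
    show "(\<lambda>_. S) integrable_on \<Omega>" using meas integrable_on_const by blast
    show "norm (g x) \<le> S" if "x \<in> \<Omega>" for x
      using S[OF that] by (simp add: g_def norm_mult)
    show "\<Omega> \<in> sets lebesgue" using meas fmeasurableD by blast
  qed
  define h where "h y = \<phi> p - e * g y" for y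
  have hint: "h integrable_on \<Omega>" unfolding h_def
    by (intro integrable_diff integrable_on_const integrable_on_mult_right gint meas)
  have "integral \<Omega> h = integral \<Omega> (\<lambda>_. \<phi> p) - integral \<Omega> (\<lambda>y. e * g y)"
    unfolding h_def
    by (rule integral_diff) (use meas integrable_on_const gint integrable_on_mult_right in auto)
  also have "integral \<Omega> (\<lambda>y. e * g y) = 0"
    using I by (simp add: g_def)
  also have "integral \<Omega> (\<lambda>_. \<phi> p) = measure lebesgue \<Omega> *\<^sub>R \<phi> p"
  proof -
    have "((\<lambda>_. 1::real) has_integral measure lebesgue \<Omega>) \<Omega>"
      using meas lmeasure_integral integrable_on_const by (metis integrable_integral)
    from has_integral_scaleR_left[OF this, of "\<phi> p"] show ?thesis
      by (simp add: integral_unique)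
  qed
  finally have ih: "integral \<Omega> h = measure lebesgue \<Omega> *\<^sub>R \<phi> p" by simp
  have hb: "norm (h y) \<le> A + k * d * S" if y: "y \<in> \<Omega>" for y
  proof -
    define t where "t = - (k * (xh \<bullet> (y - p)))"
    have eg: "e * g y = exp (\<i> * complex_of_real t) * \<phi> y"
      unfolding e_def g_def t_def by (simp add: exp_add[symmetric] algebra_simps inner_diff_right)
    have "h y = (\<phi> p - \<phi> y) - (exp (\<i> * complex_of_real t) - 1) * \<phi> y"
      unfolding h_def eg by (simp add: algebra_simps)
    then have "norm (h y) \<le> cmod (\<phi> p - \<phi> y) + cmod (exp (\<i> * complex_of_real t) - 1) * cmod (\<phi> y)"
      by (metis norm_mult norm_triangle_ineq4)
    also have "cmod (\<phi> p - \<phi> y) \<le> A" using A[OF y] by (simp add: norm_minus_commute)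
    also have "cmod (exp (\<i> * complex_of_real t) - 1) * cmod (\<phi> y) \<le> (k * d) * S"
    proof (rule mult_mono)
      have "\<bar>t\<bar> = k * \<bar>xh \<bullet> (y - p)\<bar>" using assms(5) by (simp add: t_def abs_mult)
      also have "\<dots> \<le> k * (norm xh * norm (y - p))"
        using Cauchy_Schwarz_ineq2 assms(5) mult_left_mono by blast
      also have "\<dots> \<le> k * d" using d[OF y] assms(5,6) mult_left_mono by fastforce
      finally show "cmod (exp (\<i> * complex_of_real t) - 1) \<le> k * d"
        using exp_i_bound order_trans by blast
      show "cmod (\<phi> y) \<le> S" using S[OF y] .
      show "0 \<le> k * d" using d[OF y] assms(5) by (meson norm_ge_zero order_trans mult_nonneg_nonneg)
    qed simp
    finally show ?thesis by simp
  qed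
  have "norm (integral \<Omega> h) \<le> integral \<Omega> (\<lambda>_. A + k * d * S)"
    by (rule integral_norm_bound_integral[OF hint]) (use meas integrable_on_const hb in auto)
  also have "\<dots> = measure lebesgue \<Omega> * (A + k * d * S)"
    using meas integral_mult_left[of \<Omega> "\<lambda>_. 1::real" "A + k * d * S"] by (simp add: lmeasure_integral)
  finally have "measure lebesgue \<Omega> * cmod (\<phi> p) \<le> measure lebesgue \<Omega> * (A + k * d * S)"
    using ih by simp
  moreover have "measure lebesgue \<Omega> > 0"
  proof -
    obtain c where c: "c \<in> \<Omega>" using assms(3) by blast
    then obtain r where r: "r > 0" "ball c r \<subseteq> \<Omega>" using assms(1) open_contains_ball by blast
    have "measure lebesgue (ball c r) \<le> measure lebesgue \<Omega>"
      using r meas by (intro measure_mono_fmeasurable) auto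
    moreover have "measure lebesgue (ball c r) > 0"
      using content_ball_pos[OF r(1)] by (simp add: measure_completion)
    ultimately show ?thesis by linarith
  qed
  ultimately show ?thesis by simp
qed

theorem corollary2p2:
  fixes k Rm :: real
  assumes "CARD('n::finite) \<ge> 2" and "k > 0" and "Rm > 0"
  shows "\<exists>C>0. \<forall>(\<alpha>::real) (\<Omega>::(real^'n) set) (\<phi>::real^'n \<Rightarrow> complex).
           0 \<le> \<alpha> \<and> \<alpha> \<le> 1 \<and> lipschitz_domain \<Omega> \<and> diameter \<Omega> \<le> Rm \<and>
           connected (- closure \<Omega>) \<and> \<phi> \<in> holder_space \<alpha> (closure \<Omega>) \<and>
           radiationless k \<Omega> \<phi> \<longrightarrow>
           diameter \<Omega> powr \<alpha> \<ge>
             C * (SUP x\<in>frontier \<Omega>. cmod (\<phi> x)) / holder_norm \<alpha> (closure \<Omega>) \<phi>"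
proof -
  define m where "m = max 1 Rm"
  define K where "K = 1 + k * m"
  have m1: "m \<ge> 1" unfolding m_def by simp
  have K0: "K > 0" unfolding K_def using assms(2) m1 by (simp add: add_pos_nonneg)
  show ?thesis
  proof (intro exI[of _ "1/K"] conjI allI impI)
    show "1/K > 0" using K0 by simp
    fix \<alpha> :: real and \<Omega> :: "(real^'n) set" and \<phi> :: "real^'n \<Rightarrow> complex"
    assume H: "0 \<le> \<alpha> \<and> \<alpha> \<le> 1 \<and> lipschitz_domain \<Omega> \<and> diameter \<Omega> \<le> Rm \<and>
           connected (- closure \<Omega>) \<and> \<phi> \<in> holder_space \<alpha> (closure \<Omega>) \<and>
           radiationless k \<Omega> \<phi>"
    then have a0: "0 \<le> \<alpha>" and dR: "diameter \<Omega> \<le> Rm" and LD: "lipschitz_domain \<Omega>"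
      and hs: "\<phi> \<in> holder_space \<alpha> (closure \<Omega>)" and rad: "radiationless k \<Omega> \<phi>" by auto
    from LD have op: "open \<Omega>" and ne: "\<Omega> \<noteq> {}" and bd: "bounded \<Omega>"
      unfolding lipschitz_domain_def by auto
    from hs have cont: "continuous_on (closure \<Omega>) \<phi>" and bph: "bounded (\<phi> ` closure \<Omega>)"
      and "\<exists>M. \<forall>x\<in>closure \<Omega>. \<forall>y\<in>closure \<Omega>. x \<noteq> y \<longrightarrow> cmod (\<phi> x - \<phi> y) \<le> M * dist x y powr \<alpha>"
      unfolding holder_space_def by auto
    then obtain M where M: "\<And>x y. x\<in>closure \<Omega> \<Longrightarrow> y\<in>closure \<Omega> \<Longrightarrow> x \<noteq> y \<Longrightarrow> cmod (\<phi> x - \<phi> y) \<le> M * dist x y powr \<alpha>"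
      by blast
    have UN: "\<Omega> \<noteq> UNIV" using bd not_bounded_UNIV by auto
    have frne: "frontier \<Omega> \<noteq> {}" using frontier_not_empty[OF ne UN] .
    define P where "P = {(x, y). x \<in> closure \<Omega> \<and> y \<in> closure \<Omega> \<and> x \<noteq> y}"
    define q where "q xy = cmod (\<phi> (fst xy) - \<phi> (snd xy)) / dist (fst xy) (snd xy) powr \<alpha>" for xy
    define S where "S = (SUP x\<in>closure \<Omega>. cmod (\<phi> x))"
    define Hs where "Hs = (SUP xy\<in>P. q xy)"
    have N: "holder_norm \<alpha> (closure \<Omega>) \<phi> = S + Hs"
      unfolding holder_norm_def S_def Hs_def P_def q_def by simp
    obtain B where B: "\<And>x. x \<in> closure \<Omega> \<Longrightarrow> cmod (\<phi> x) \<le> B"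
      using bph unfolding bounded_iff by auto
    have bddS: "bdd_above ((\<lambda>x. cmod (\<phi> x)) ` closure \<Omega>)"
      using B by (intro bdd_aboveI2) auto
    have Sup: "\<And>x. x \<in> closure \<Omega> \<Longrightarrow> cmod (\<phi> x) \<le> S"
      unfolding S_def using bddS by (rule cSUP_upper2) auto
    have qM: "q xy \<le> M" if xyP: "xy \<in> P" for xy
    proof -
      obtain x y where xy: "xy = (x, y)" "x \<in> closure \<Omega>" "y \<in> closure \<Omega>" "x \<noteq> y"
        using xyP unfolding P_def by (cases xy) auto
      have dp: "dist x y powr \<alpha> > 0" using xy by simp
      show ?thesis using M[OF xy(2-4)] dp unfolding q_def xy(1)
        by (simp add: divide_le_eq)
    qed
    have bddH: "bdd_above (q ` P)" using qM by (intro bdd_aboveI2) auto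
    have Hq: "\<And>x y. x\<in>closure \<Omega> \<Longrightarrow> y\<in>closure \<Omega> \<Longrightarrow> x \<noteq> y \<Longrightarrow> cmod (\<phi> x - \<phi> y) \<le> Hs * dist x y powr \<alpha>"
    proof -
      fix x y assume xy: "x\<in>closure \<Omega>" "y\<in>closure \<Omega>" "x \<noteq> y"
      have "q (x, y) \<le> Hs" unfolding Hs_def
        by (rule cSUP_upper[OF _ bddH]) (use xy in \<open>auto simp: P_def\<close>)
      moreover have dp: "dist x y powr \<alpha> > 0" using xy by simp
      ultimately show "cmod (\<phi> x - \<phi> y) \<le> Hs * dist x y powr \<alpha>"
        unfolding q_def by (simp add: divide_le_eq)
    qed
    define d where "d = diameter \<Omega>"
    have dist_d: "norm (y - p) \<le> d" if "y \<in> closure \<Omega>" "p \<in> closure \<Omega>" for y p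
    proof -
      have "dist y p \<le> diameter (closure \<Omega>)"
        using that bd by (intro diameter_bounded_bound) auto
      then show ?thesis using diameter_closure[OF bd] by (simp add: d_def dist_norm)
    qed
    obtain y0 where y0: "y0 \<in> \<Omega>" using ne by blast
    obtain p0 where p0: "p0 \<in> frontier \<Omega>" using frne by blast
    have fr: "frontier \<Omega> = closure \<Omega> - \<Omega>" using op by (simp add: frontier_def interior_open)
    have p0c: "p0 \<in> closure \<Omega>" "p0 \<notin> \<Omega>" using p0 fr by auto
    have y0c: "y0 \<in> closure \<Omega>" using y0 closure_subset by blast
    have ypne: "y0 \<noteq> p0" using y0 p0c by auto
    have d0: "d > 0"
    proof -
      have "norm (y0 - p0) > 0" using ypne by simp
      then show ?thesis using dist_d[OF y0c p0c(1)] by linarith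
    qed
    have H0: "Hs \<ge> 0"
    proof -
      have "q (y0, p0) \<le> Hs" unfolding Hs_def
        by (rule cSUP_upper[OF _ bddH]) (use y0c p0c ypne in \<open>auto simp: P_def\<close>)
      moreover have "q (y0, p0) \<ge> 0" unfolding q_def by simp
      ultimately show ?thesis by linarith
    qed
    have S0: "S \<ge> 0" using Sup[OF y0c] by (meson norm_ge_zero order_trans)
    have dpos: "d powr \<alpha> \<ge> 0" by simp
    have dm: "d \<le> m * d powr \<alpha>"
    proof (cases "d \<le> 1")
      case True
      have "d powr 1 \<le> d powr \<alpha>" using powr_mono'[of \<alpha> 1 d] H d0 True by auto
      moreover have "d powr \<alpha> \<le> m * d powr \<alpha>" using m1 dpos by (simp add: mult_le_cancel_right1)
      moreover have "d powr 1 = d" using d0 by simp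
      ultimately show ?thesis by linarith
    next
      case False
      have "1 \<le> d powr \<alpha>" using False a0 ge_one_powr_ge_zero by simp
      moreover have "d \<le> m" using dR m1 unfolding d_def m_def by simp
      ultimately show ?thesis using m1
        by (metis mult_le_cancel_left1 order_trans dual_order.trans less_le_not_le not_le zero_less_one)
    qed
    obtain b :: "real^'n" where b: "b \<in> Basis" using nonempty_Basis by blast
    have nb: "norm b = 1" using b by simp
    have Iz: "integral \<Omega> (\<lambda>y. exp (- \<i> * complex_of_real (k * (b \<bullet> y))) * \<phi> y) = 0"
      using rad nb unfolding radiationless_def by blast
    have pt: "cmod (\<phi> p) \<le> K * d powr \<alpha> * (S + Hs)" if p: "p \<in> frontier \<Omega>" for p
    proof -
      have pc: "p \<in> closure \<Omega>" "p \<notin> \<Omega>" using p fr by auto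
      have "cmod (\<phi> p) \<le> Hs * d powr \<alpha> + k * d * S"
      proof (rule key[OF op bd ne _ _ nb _ _ _ Iz])
        show "continuous_on \<Omega> \<phi>" using cont closure_subset continuous_on_subset by blast
        show "0 \<le> k" using assms(2) by simp
        show "cmod (\<phi> y - \<phi> p) \<le> Hs * d powr \<alpha>" if y: "y \<in> \<Omega>" for y
        proof -
          have yc: "y \<in> closure \<Omega>" using y closure_subset by blast
          have "cmod (\<phi> y - \<phi> p) \<le> Hs * dist y p powr \<alpha>"
            using Hq[OF yc pc(1)] y pc(2) by auto
          also have "\<dots> \<le> Hs * d powr \<alpha>"
            using dist_d[OF yc pc(1)] H0 a0 by (intro mult_left_mono powr_mono2) (auto simp: dist_norm)
          finally show ?thesis .
        qed
        show "cmod (\<phi> y) \<le> S" if "y \<in> \<Omega>" for y using Sup that closure_subset by blast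
        show "norm (y - p) \<le> d" if "y \<in> \<Omega>" for y using dist_d that pc closure_subset by blast
      qed
      also have "k * d * S \<le> k * (m * d powr \<alpha>) * S"
        using dm assms(2) S0 by (intro mult_right_mono mult_left_mono) auto
      also have "Hs * d powr \<alpha> + k * (m * d powr \<alpha>) * S \<le> K * d powr \<alpha> * (S + Hs)"
      proof -
        have "K * d powr \<alpha> * (S + Hs) = Hs * d powr \<alpha> + k * (m * d powr \<alpha>) * S + (d powr \<alpha> * S + k * m * d powr \<alpha> * Hs)"
          unfolding K_def by (simp add: algebra_simps)
        moreover have "d powr \<alpha> * S + k * m * d powr \<alpha> * Hs \<ge> 0"
          using dpos S0 H0 assms(2) m1 by (intro add_nonneg_nonneg mult_nonneg_nonneg) auto
        ultimately show ?thesis by linarith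
      qed
      finally show ?thesis by linarith
    qed
    have supfr: "(SUP x\<in>frontier \<Omega>. cmod (\<phi> x)) \<le> K * d powr \<alpha> * (S + Hs)"
      using frne pt by (intro cSUP_least) auto
    show "1 / K * (SUP x\<in>frontier \<Omega>. cmod (\<phi> x)) / holder_norm \<alpha> (closure \<Omega>) \<phi> \<le> diameter \<Omega> powr \<alpha>"
    proof (cases "S + Hs = 0")
      case True
      then show ?thesis unfolding N by simp
    next
      case False
      then have SH: "S + Hs > 0" using S0 H0 by linarith
      have "1 / K * (SUP x\<in>frontier \<Omega>. cmod (\<phi> x)) / (S + Hs) \<le> 1 / K * (K * d powr \<alpha> * (S + Hs)) / (S + Hs)"
        using supfr K0 SH by (intro divide_right_mono mult_left_mono) auto
      also have "\<dots> = d powr \<alpha>" using K0 SH by simp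
      finally show ?thesis unfolding N d_def .
    qed
  qed
qed

end
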